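(* Let $(M,T)$ be an object of $\mathbb T({}_H\mathcal M)$. Then $(M,T)\cong(H\triangleright T(M),T)$ in $\mathbb T({}_H\mathcal M)$, where $H\triangleright T(M)$ is the $H$-submodule of $M$ generated by $T(M)$, equipped with the restriction of $T$. Consequently, if $M'\subseteq M$ is an $H$-submodule with $T(M')=0$, then $(M,T)\cong(M/M',T)$, where $T$ also denotes the projection induced on $M/M'$.
   Context: Throughout, $k$ is a field and $H$ is a Hopf algebra over $k$ with bijective antipode $S$ and Sweedler notation $\Delta(h)=h_{(1)}\otimes h_{(2)}$. For a left $H$-module $M$ (action $\triangleright$) and linear $T:M\to M$, put $T_h(m)=h_{(1)}\triangleright T(S(h_{(2)})\triangleright m)$. A projection $T$ ($T^2=T$) satisfies the c-condition if $T_h\circ T=T\circ T_h$ for all $h$. The category $\mathbb T({}_H\mathcal M)$ is defined as follows: - objects are pairs $(M,T)$ with $M$ a left $H$-module and $T$ a linear projection on $M$ satisfying the c-condition; - morphisms $f:(M,T)\to(N,S)$ are linear maps $f:T(M)\to S(N)$ with $f(T(h\triangleright m))=S(h\triangleright f(m))$ for all $h\in H$, $m\in T(M)$. *)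

theory Defs
  imports Main
begin

text \<open>Elements of H (x) H are represented by finite lists of pairs (Sweedler sums); equality in
 H (x) H (resp. H (x) H (x) H) is tested against all k-bilinear (resp. trilinear) forms, which
 characterises equality of tensors for vector spaces over a field.\<close>

definition linH :: "('k::field \<Rightarrow> 'h::ring_1 \<Rightarrow> 'h) \<Rightarrow> ('h \<Rightarrow> 'k) \<Rightarrow> bool" where
  "linH sH f \<longleftrightarrow> (\<forall>a b. f (a + b) = f a + f b) \<and> (\<forall>c a. f (sH c a) = c * f a)"

definition bilinH :: "('k::field \<Rightarrow> 'h::ring_1 \<Rightarrow> 'h) \<Rightarrow> ('h \<Rightarrow> 'h \<Rightarrow> 'k) \<Rightarrow> bool" where
  "bilinH sH \<phi> \<longleftrightarrow> (\<forall>b. linH sH (\<lambda>a. \<phi> a b)) \<and> (\<forall>a. linH sH (\<phi> a))"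

definition trilinH :: "('k::field \<Rightarrow> 'h::ring_1 \<Rightarrow> 'h) \<Rightarrow> ('h \<Rightarrow> 'h \<Rightarrow> 'h \<Rightarrow> 'k) \<Rightarrow> bool" where
  "trilinH sH \<psi> \<longleftrightarrow> (\<forall>b c. linH sH (\<lambda>a. \<psi> a b c)) \<and> (\<forall>a c. linH sH (\<lambda>b. \<psi> a b c))
      \<and> (\<forall>a b. linH sH (\<psi> a b))"

definition teq2 :: "('k::field \<Rightarrow> 'h::ring_1 \<Rightarrow> 'h) \<Rightarrow> ('h \<times> 'h) list \<Rightarrow> ('h \<times> 'h) list \<Rightarrow> bool" where
  "teq2 sH xs ys \<longleftrightarrow> (\<forall>\<phi>. bilinH sH \<phi> \<longrightarrow>
      sum_list (map (\<lambda>(a, b). \<phi> a b) xs) = sum_list (map (\<lambda>(a, b). \<phi> a b) ys))"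

definition hopf_algebra ::
  "('k::field \<Rightarrow> 'h::ring_1 \<Rightarrow> 'h) \<Rightarrow> ('h \<Rightarrow> ('h \<times> 'h) list) \<Rightarrow> ('h \<Rightarrow> 'k) \<Rightarrow> ('h \<Rightarrow> 'h) \<Rightarrow> bool" where
  "hopf_algebra sH Delta eps S \<longleftrightarrow>
     \<comment> \<open>k-algebra\<close>
     (\<forall>c a b. sH c (a + b) = sH c a + sH c b) \<and>
     (\<forall>c d a. sH (c + d) a = sH c a + sH d a) \<and>
     (\<forall>c d a. sH (c * d) a = sH c (sH d a)) \<and>
     (\<forall>a. sH 1 a = a) \<and>
     (\<forall>c a b. sH c (a * b) = sH c a * b \<and> sH c (a * b) = a * sH c b) \<and>
     \<comment> \<open>comultiplication: linear, coassociative, algebra map\<close>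
     (\<forall>a b. teq2 sH (Delta (a + b)) (Delta a @ Delta b)) \<and>
     (\<forall>c a. teq2 sH (Delta (sH c a)) (map (\<lambda>(x, y). (sH c x, y)) (Delta a))) \<and>
     (\<forall>a \<psi>. trilinH sH \<psi> \<longrightarrow>
        sum_list (map (\<lambda>(x, y). sum_list (map (\<lambda>(u, v). \<psi> u v y) (Delta x))) (Delta a)) =
        sum_list (map (\<lambda>(x, y). sum_list (map (\<lambda>(u, v). \<psi> x u v) (Delta y))) (Delta a))) \<and>
     (\<forall>a b. teq2 sH (Delta (a * b))
        (concat (map (\<lambda>(x, y). map (\<lambda>(u, v). (x * u, y * v)) (Delta b)) (Delta a)))) \<and>
     teq2 sH (Delta 1) [(1, 1)] \<and>
     \<comment> \<open>counit: linear, algebra map, counit laws\<close>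
     linH sH eps \<and>
     (\<forall>a b. eps (a * b) = eps a * eps b) \<and> eps 1 = 1 \<and>
     (\<forall>a. sum_list (map (\<lambda>(x, y). sH (eps x) y) (Delta a)) = a) \<and>
     (\<forall>a. sum_list (map (\<lambda>(x, y). sH (eps y) x) (Delta a)) = a) \<and>
     \<comment> \<open>antipode: linear, antipode laws, bijective\<close>
     (\<forall>a b. S (a + b) = S a + S b) \<and> (\<forall>c a. S (sH c a) = sH c (S a)) \<and>
     (\<forall>a. sum_list (map (\<lambda>(x, y). S x * y) (Delta a)) = sH (eps a) 1) \<and>
     (\<forall>a. sum_list (map (\<lambda>(x, y). x * S y) (Delta a)) = sH (eps a) 1) \<and>
     bij S"

record ('k, 'h, 'm) hmod =
  mcarr :: "'m set"
  mzero :: 'm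
  mplus :: "'m \<Rightarrow> 'm \<Rightarrow> 'm"
  msmult :: "'k \<Rightarrow> 'm \<Rightarrow> 'm"
  mact :: "'h \<Rightarrow> 'm \<Rightarrow> 'm"

definition hmodule :: "('k::field \<Rightarrow> 'h::ring_1 \<Rightarrow> 'h) \<Rightarrow> ('k, 'h, 'm) hmod \<Rightarrow> bool" where
  "hmodule sH M \<longleftrightarrow>
     mzero M \<in> mcarr M \<and>
     (\<forall>x\<in>mcarr M. \<forall>y\<in>mcarr M. mplus M x y \<in> mcarr M) \<and>
     (\<forall>c. \<forall>x\<in>mcarr M. msmult M c x \<in> mcarr M) \<and>
     (\<forall>h. \<forall>x\<in>mcarr M. mact M h x \<in> mcarr M) \<and>
     (\<forall>x\<in>mcarr M. \<forall>y\<in>mcarr M. \<forall>z\<in>mcarr M. mplus M (mplus M x y) z = mplus M x (mplus M y z)) \<and>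
     (\<forall>x\<in>mcarr M. \<forall>y\<in>mcarr M. mplus M x y = mplus M y x) \<and>
     (\<forall>x\<in>mcarr M. mplus M (mzero M) x = x) \<and>
     (\<forall>x\<in>mcarr M. \<exists>y\<in>mcarr M. mplus M x y = mzero M) \<and>
     (\<forall>c. \<forall>x\<in>mcarr M. \<forall>y\<in>mcarr M. msmult M c (mplus M x y) = mplus M (msmult M c x) (msmult M c y)) \<and>
     (\<forall>c d. \<forall>x\<in>mcarr M. msmult M (c + d) x = mplus M (msmult M c x) (msmult M d x)) \<and>
     (\<forall>c d. \<forall>x\<in>mcarr M. msmult M (c * d) x = msmult M c (msmult M d x)) \<and>
     (\<forall>x\<in>mcarr M. msmult M 1 x = x) \<and>
     (\<forall>h. \<forall>x\<in>mcarr M. \<forall>y\<in>mcarr M. mact M h (mplus M x y) = mplus M (mact M h x) (mact M h y)) \<and>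
     (\<forall>h c. \<forall>x\<in>mcarr M. mact M h (msmult M c x) = msmult M c (mact M h x)) \<and>
     (\<forall>a b. \<forall>x\<in>mcarr M. mact M (a + b) x = mplus M (mact M a x) (mact M b x)) \<and>
     (\<forall>c a. \<forall>x\<in>mcarr M. mact M (sH c a) x = msmult M c (mact M a x)) \<and>
     (\<forall>a b. \<forall>x\<in>mcarr M. mact M (a * b) x = mact M a (mact M b x)) \<and>
     (\<forall>x\<in>mcarr M. mact M 1 x = x)"

definition mlin_on :: "('k, 'h, 'm) hmod \<Rightarrow> 'm set \<Rightarrow> ('k, 'h, 'n) hmod \<Rightarrow> ('m \<Rightarrow> 'n) \<Rightarrow> bool" where
  "mlin_on M X N f \<longleftrightarrow>
     (\<forall>x\<in>X. \<forall>y\<in>X. f (mplus M x y) = mplus N (f x) (f y)) \<and>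
     (\<forall>c. \<forall>x\<in>X. f (msmult M c x) = msmult N c (f x))"

definition submod :: "('k, 'h, 'm) hmod \<Rightarrow> 'm set \<Rightarrow> bool" where
  "submod M X \<longleftrightarrow> X \<subseteq> mcarr M \<and> mzero M \<in> X \<and>
     (\<forall>x\<in>X. \<forall>y\<in>X. mplus M x y \<in> X) \<and> (\<forall>c. \<forall>x\<in>X. msmult M c x \<in> X) \<and>
     (\<forall>h. \<forall>x\<in>X. mact M h x \<in> X)"

definition gen_submod :: "('k, 'h, 'm) hmod \<Rightarrow> 'm set \<Rightarrow> 'm set" where
  "gen_submod M X = \<Inter> {N. X \<subseteq> N \<and> submod M N}"

definition Th :: "('h \<Rightarrow> ('h \<times> 'h) list) \<Rightarrow> ('h \<Rightarrow> 'h) \<Rightarrow> ('k, 'h, 'm) hmod \<Rightarrow> ('m \<Rightarrow> 'm)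
                   \<Rightarrow> 'h \<Rightarrow> 'm \<Rightarrow> 'm" where
  "Th Delta S M T h m =
     foldr (mplus M) (map (\<lambda>(x, y). mact M x (T (mact M (S y) m))) (Delta h)) (mzero M)"

definition tobj :: "('k::field \<Rightarrow> 'h::ring_1 \<Rightarrow> 'h) \<Rightarrow> ('h \<Rightarrow> ('h \<times> 'h) list) \<Rightarrow> ('h \<Rightarrow> 'h)
                    \<Rightarrow> ('k, 'h, 'm) hmod \<Rightarrow> ('m \<Rightarrow> 'm) \<Rightarrow> bool" where
  "tobj sH Delta S M T \<longleftrightarrow>
     hmodule sH M \<and>
     (\<forall>x\<in>mcarr M. T x \<in> mcarr M) \<and> mlin_on M (mcarr M) M T \<and>
     (\<forall>x\<in>mcarr M. T (T x) = T x) \<and>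
     (\<forall>h. \<forall>x\<in>mcarr M. Th Delta S M T h (T x) = T (Th Delta S M T h x))"

definition tmor :: "('k, 'h, 'm) hmod \<Rightarrow> ('m \<Rightarrow> 'm) \<Rightarrow> ('k, 'h, 'n) hmod \<Rightarrow> ('n \<Rightarrow> 'n)
                    \<Rightarrow> ('m \<Rightarrow> 'n) \<Rightarrow> bool" where
  "tmor M T N U f \<longleftrightarrow>
     (\<forall>x\<in>T ` mcarr M. f x \<in> U ` mcarr N) \<and>
     mlin_on M (T ` mcarr M) N f \<and>
     (\<forall>h. \<forall>m\<in>T ` mcarr M. f (T (mact M h m)) = U (mact N h (f m)))"

text \<open>Isomorphism in T(_H M): composition is composition of maps, identities are identity maps
 on T(M), and morphisms are equal when they agree on T(M).\<close>
definition tiso :: "('k, 'h, 'm) hmod \<Rightarrow> ('m \<Rightarrow> 'm) \<Rightarrow> ('k, 'h, 'n) hmod \<Rightarrow> ('n \<Rightarrow> 'n) \<Rightarrow> bool" where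
  "tiso M T N U \<longleftrightarrow> (\<exists>f g. tmor M T N U f \<and> tmor N U M T g \<and>
     (\<forall>x\<in>T ` mcarr M. g (f x) = x) \<and> (\<forall>y\<in>U ` mcarr N. f (g y) = y))"

definition mcoset :: "('k, 'h, 'm) hmod \<Rightarrow> 'm set \<Rightarrow> 'm \<Rightarrow> 'm set" where
  "mcoset M X m = {mplus M m x | x. x \<in> X}"

definition quot_mod :: "('k, 'h, 'm) hmod \<Rightarrow> 'm set \<Rightarrow> ('k, 'h, 'm set) hmod" where
  "quot_mod M X =
     \<lparr> mcarr = {mcoset M X m | m. m \<in> mcarr M},
       mzero = X,
       mplus = (\<lambda>A B. {mplus M (mplus M a b) x | a b x. a \<in> A \<and> b \<in> B \<and> x \<in> X}),
       msmult = (\<lambda>c A. {mplus M (msmult M c a) x | a x. a \<in> A \<and> x \<in> X}),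
       mact = (\<lambda>h A. {mplus M (mact M h a) x | a x. a \<in> A \<and> x \<in> X}) \<rparr>"

definition quot_map :: "('k, 'h, 'm) hmod \<Rightarrow> 'm set \<Rightarrow> ('m \<Rightarrow> 'm) \<Rightarrow> 'm set \<Rightarrow> 'm set" where
  "quot_map M X T A = {mplus M (T a) x | a x. a \<in> A \<and> x \<in> X}"

end

theory Submission
  imports Defs
begin

lemma upd_sel: "mcarr (M\<lparr>mcarr := N\<rparr>) = N" "mplus (M\<lparr>mcarr := N\<rparr>) = mplus M"
  "mzero (M\<lparr>mcarr := N\<rparr>) = mzero M" "msmult (M\<lparr>mcarr := N\<rparr>) = msmult M"
  "mact (M\<lparr>mcarr := N\<rparr>) = mact M" by simp_all

locale hm =
  fixes sH :: "'k::field \<Rightarrow> 'h::ring_1 \<Rightarrow> 'h" and M :: "('k,'h,'m) hmod"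
  assumes hmod: "hmodule sH M"
begin

lemma zc[simp]: "mzero M \<in> mcarr M" using hmod unfolding hmodule_def by meson
lemma adc[simp]: "x \<in> mcarr M \<Longrightarrow> y \<in> mcarr M \<Longrightarrow> mplus M x y \<in> mcarr M"
  using hmod unfolding hmodule_def by meson
lemma smc[simp]: "x \<in> mcarr M \<Longrightarrow> msmult M c x \<in> mcarr M"
  using hmod unfolding hmodule_def by meson
lemma acc[simp]: "x \<in> mcarr M \<Longrightarrow> mact M h x \<in> mcarr M"
  using hmod unfolding hmodule_def by meson
lemma assoc: "x \<in> mcarr M \<Longrightarrow> y \<in> mcarr M \<Longrightarrow> z \<in> mcarr M \<Longrightarrow>
   mplus M (mplus M x y) z = mplus M x (mplus M y z)"
  using hmod unfolding hmodule_def by meson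
lemma comm: "x \<in> mcarr M \<Longrightarrow> y \<in> mcarr M \<Longrightarrow> mplus M x y = mplus M y x"
  using hmod unfolding hmodule_def by meson
lemma lzero[simp]: "x \<in> mcarr M \<Longrightarrow> mplus M (mzero M) x = x"
  using hmod unfolding hmodule_def by meson
lemma rzero[simp]: "x \<in> mcarr M \<Longrightarrow> mplus M x (mzero M) = x"
  using comm lzero zc by metis
lemma lcomm: "x \<in> mcarr M \<Longrightarrow> y \<in> mcarr M \<Longrightarrow> z \<in> mcarr M \<Longrightarrow>
   mplus M x (mplus M y z) = mplus M y (mplus M x z)"
  using assoc comm by metis
lemma inv_ex: "x \<in> mcarr M \<Longrightarrow> \<exists>y\<in>mcarr M. mplus M x y = mzero M"
  using hmod unfolding hmodule_def by meson
lemma s_add[simp]: "x \<in> mcarr M \<Longrightarrow> y \<in> mcarr M \<Longrightarrow> msmult M c (mplus M x y) = mplus M (msmult M c x) (msmult M c y)"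
  using hmod unfolding hmodule_def by meson
lemma s_addc: "x \<in> mcarr M \<Longrightarrow> msmult M (c + d) x = mplus M (msmult M c x) (msmult M d x)"
  using hmod unfolding hmodule_def by meson
lemma s_mult[simp]: "x \<in> mcarr M \<Longrightarrow> msmult M (c * d) x = msmult M c (msmult M d x)"
  using hmod unfolding hmodule_def by meson
lemma s_one[simp]: "x \<in> mcarr M \<Longrightarrow> msmult M 1 x = x"
  using hmod unfolding hmodule_def by meson
lemma a_add[simp]: "x \<in> mcarr M \<Longrightarrow> y \<in> mcarr M \<Longrightarrow> mact M h (mplus M x y) = mplus M (mact M h x) (mact M h y)"
  using hmod unfolding hmodule_def by meson
lemma a_sm[simp]: "x \<in> mcarr M \<Longrightarrow> mact M h (msmult M c x) = msmult M c (mact M h x)"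
  using hmod unfolding hmodule_def by meson
lemma a_addh: "x \<in> mcarr M \<Longrightarrow> mact M (a + b) x = mplus M (mact M a x) (mact M b x)"
  using hmod unfolding hmodule_def by meson
lemma a_sH[simp]: "x \<in> mcarr M \<Longrightarrow> mact M (sH c a) x = msmult M c (mact M a x)"
  using hmod unfolding hmodule_def by meson
lemma a_mult[simp]: "x \<in> mcarr M \<Longrightarrow> mact M (a * b) x = mact M a (mact M b x)"
  using hmod unfolding hmodule_def by meson
lemma a_one[simp]: "x \<in> mcarr M \<Longrightarrow> mact M 1 x = x"
  using hmod unfolding hmodule_def by meson

lemma s_zero: assumes x: "x \<in> mcarr M" shows "msmult M 0 x = mzero M"
proof -
  define a where "a = msmult M 0 x"
  have ac: "a \<in> mcarr M" using x a_def by simp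
  have e: "a = mplus M a a" using s_addc[OF x, of 0 0] a_def by simp
  obtain y where y: "y \<in> mcarr M" "mplus M a y = mzero M" using inv_ex[OF ac] by blast
  have "mzero M = mplus M a y" using y by simp
  also have "\<dots> = mplus M (mplus M a a) y" using e by (rule arg_cong[where f="\<lambda>z. mplus M z y"])
  also have "\<dots> = mplus M a (mplus M a y)" using assoc ac y by simp
  also have "\<dots> = a" using y ac by simp
  finally show ?thesis using a_def by simp
qed

lemma neg: assumes x: "x \<in> mcarr M" shows "mplus M x (msmult M (-1) x) = mzero M"
proof -
  have "mplus M x (msmult M (-1) x) = mplus M (msmult M 1 x) (msmult M (-1) x)" using x by simp
  also have "\<dots> = msmult M (1 + -1) x" using s_addc[OF x, of 1 "-1"] by simp
  also have "\<dots> = mzero M" using s_zero[OF x] by simp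
  finally show ?thesis .
qed

lemma sub_hmod: assumes sub: "submod M N" shows "hmodule sH (M\<lparr>mcarr := N\<rparr>)"
proof -
  have NC: "\<And>x. x \<in> N \<Longrightarrow> x \<in> mcarr M" using sub unfolding submod_def by blast
  have inv: "\<forall>x\<in>N. \<exists>y\<in>N. mplus M x y = mzero M"
    using sub neg NC unfolding submod_def by blast
  have SB: "N \<subseteq> mcarr M" "mzero M \<in> N" "\<forall>x\<in>N. \<forall>y\<in>N. mplus M x y \<in> N"
    "\<forall>c. \<forall>x\<in>N. msmult M c x \<in> N" "\<forall>h. \<forall>x\<in>N. mact M h x \<in> N"
    using sub unfolding submod_def by auto
  show ?thesis using SB inv NC unfolding hmodule_def upd_sel
    by (meson assoc comm lzero s_add s_addc s_mult s_one a_add a_sm a_addh a_sH a_mult a_one)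
qed

lemma carr_sub: "submod M (mcarr M)" unfolding submod_def by simp

lemma gen_sub: assumes "Y \<subseteq> mcarr M" shows "submod M (gen_submod M Y)"
  using carr_sub assms unfolding gen_submod_def submod_def by blast

lemma gen_ge: "Y \<subseteq> gen_submod M Y" unfolding gen_submod_def by blast

end

locale hq = hm +
  fixes X assumes sub: "submod M X"
begin

lemma Xc[simp]: "x \<in> X \<Longrightarrow> x \<in> mcarr M" using sub unfolding submod_def by blast
lemma Xz[simp]: "mzero M \<in> X" using sub unfolding submod_def by blast
lemma Xa[simp]: "x \<in> X \<Longrightarrow> y \<in> X \<Longrightarrow> mplus M x y \<in> X" using sub unfolding submod_def by blast
lemma Xs[simp]: "x \<in> X \<Longrightarrow> msmult M c x \<in> X" using sub unfolding submod_def by blast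
lemma Xact[simp]: "x \<in> X \<Longrightarrow> mact M h x \<in> X" using sub unfolding submod_def by blast

abbreviation cs where "cs m \<equiv> mcoset M X m"
abbreviation Q where "Q \<equiv> quot_mod M X"

lemma cs_char: "z \<in> cs m \<longleftrightarrow> (\<exists>x\<in>X. z = mplus M m x)" unfolding mcoset_def by blast

lemma cs_in[simp]: "m \<in> mcarr M \<Longrightarrow> cs m \<in> mcarr Q" unfolding quot_mod_def by auto

lemma ball_q: "(\<forall>A\<in>mcarr Q. P A) \<longleftrightarrow> (\<forall>m\<in>mcarr M. P (cs m))"
  unfolding quot_mod_def by auto
lemma bex_q: "(\<exists>A\<in>mcarr Q. P A) \<longleftrightarrow> (\<exists>m\<in>mcarr M. P (cs m))"
  unfolding quot_mod_def by auto

lemma zero_q[simp]: "mzero Q = cs (mzero M)"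
  unfolding quot_mod_def mcoset_def by (auto simp: quot_mod_def, metis Xc lzero)

lemma cs_plus[simp]: assumes m: "m \<in> mcarr M" and n: "n \<in> mcarr M"
  shows "mplus Q (cs m) (cs n) = cs (mplus M m n)"
proof (rule set_eqI)
  fix z
  show "z \<in> mplus Q (cs m) (cs n) \<longleftrightarrow> z \<in> cs (mplus M m n)"
  proof
    assume "z \<in> mplus Q (cs m) (cs n)"
    then obtain x1 x2 x where z: "z = mplus M (mplus M (mplus M m x1) (mplus M n x2)) x"
      and xs: "x1 \<in> X" "x2 \<in> X" "x \<in> X"
      by (auto simp: quot_mod_def mcoset_def)
    then have "z = mplus M (mplus M m n) (mplus M x1 (mplus M x2 x))"
      using m n by (simp add: assoc comm lcomm)
    then show "z \<in> cs (mplus M m n)" using xs unfolding cs_char by auto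
  next
    assume "z \<in> cs (mplus M m n)"
    then obtain x where z: "z = mplus M (mplus M m n) x" and x: "x \<in> X" unfolding cs_char by auto
    have "mplus M m (mzero M) \<in> cs m" "mplus M n (mzero M) \<in> cs n" unfolding cs_char by auto
    then show "z \<in> mplus Q (cs m) (cs n)" using z x m n
      unfolding quot_mod_def by simp blast
  qed
qed

lemma cs_sm[simp]: assumes m: "m \<in> mcarr M"
  shows "msmult Q c (cs m) = cs (msmult M c m)"
proof (rule set_eqI)
  fix z
  show "z \<in> msmult Q c (cs m) \<longleftrightarrow> z \<in> cs (msmult M c m)"
  proof
    assume "z \<in> msmult Q c (cs m)"
    then obtain x1 x where z: "z = mplus M (msmult M c (mplus M m x1)) x"
      and xs: "x1 \<in> X" "x \<in> X"
      by (auto simp: quot_mod_def mcoset_def)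
    then have "z = mplus M (msmult M c m) (mplus M (msmult M c x1) x)"
      using m by (simp add: assoc)
    then show "z \<in> cs (msmult M c m)" using xs unfolding cs_char by auto
  next
    assume "z \<in> cs (msmult M c m)"
    then obtain x where z: "z = mplus M (msmult M c m) x" and x: "x \<in> X" unfolding cs_char by auto
    have "mplus M m (mzero M) \<in> cs m" unfolding cs_char by auto
    then show "z \<in> msmult Q c (cs m)" using z x m
      unfolding quot_mod_def by simp blast
  qed
qed

lemma cs_act[simp]: assumes m: "m \<in> mcarr M"
  shows "mact Q h (cs m) = cs (mact M h m)"
proof (rule set_eqI)
  fix z
  show "z \<in> mact Q h (cs m) \<longleftrightarrow> z \<in> cs (mact M h m)"
  proof
    assume "z \<in> mact Q h (cs m)"
    then obtain x1 x where z: "z = mplus M (mact M h (mplus M m x1)) x"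
      and xs: "x1 \<in> X" "x \<in> X"
      by (auto simp: quot_mod_def mcoset_def)
    then have "z = mplus M (mact M h m) (mplus M (mact M h x1) x)"
      using m by (simp add: assoc)
    then show "z \<in> cs (mact M h m)" using xs unfolding cs_char by auto
  next
    assume "z \<in> cs (mact M h m)"
    then obtain x where z: "z = mplus M (mact M h m) x" and x: "x \<in> X" unfolding cs_char by auto
    have "mplus M m (mzero M) \<in> cs m" unfolding cs_char by auto
    then show "z \<in> mact Q h (cs m)" using z x m
      unfolding quot_mod_def by simp blast
  qed
qed

lemma q_hmod: "hmodule sH Q"
proof -
  have inv: "\<forall>m\<in>mcarr M. \<exists>n\<in>mcarr M. cs (mplus M m n) = cs (mzero M)" using neg smc by metis
  show ?thesis unfolding hmodule_def ball_q bex_q using inv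
    by (simp add: assoc comm lcomm s_addc a_addh)
qed

end

lemma ball_img: "(\<forall>x\<in>f ` A. P x) \<longleftrightarrow> (\<forall>a\<in>A. P (f a))" by blast

locale hqt = hq +
  fixes T
  assumes Tc[simp]: "x \<in> mcarr M \<Longrightarrow> T x \<in> mcarr M"
    and Tadd[simp]: "x \<in> mcarr M \<Longrightarrow> y \<in> mcarr M \<Longrightarrow> T (mplus M x y) = mplus M (T x) (T y)"
    and Tsm[simp]: "x \<in> mcarr M \<Longrightarrow> T (msmult M c x) = msmult M c (T x)"
    and Ti[simp]: "x \<in> mcarr M \<Longrightarrow> T (T x) = T x"
    and TX[simp]: "x \<in> X \<Longrightarrow> T x = mzero M"
begin

lemma self_in[simp]: "m \<in> mcarr M \<Longrightarrow> m \<in> cs m"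
  unfolding cs_char by (metis Xz rzero)

lemma Tcs: assumes m: "m \<in> mcarr M" and a: "a \<in> cs m" shows "T a = T m"
proof -
  obtain x where x: "x \<in> X" "a = mplus M m x" using a unfolding cs_char by blast
  then show ?thesis using m by simp
qed

lemma gl[simp]: "m \<in> mcarr M \<Longrightarrow> T (SOME a. a \<in> cs m) = T m"
  by (rule Tcs, assumption, rule someI, rule self_in)

lemma qm[simp]: assumes m: "m \<in> mcarr M" shows "quot_map M X T (cs m) = cs (T m)"
proof (rule set_eqI)
  fix z
  show "z \<in> quot_map M X T (cs m) \<longleftrightarrow> z \<in> cs (T m)"
  proof
    assume "z \<in> quot_map M X T (cs m)"
    then obtain a x where z: "z = mplus M (T a) x" "a \<in> cs m" "x \<in> X"
      unfolding quot_map_def by blast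
    then show "z \<in> cs (T m)" using Tcs[OF m] unfolding cs_char by auto
  next
    assume "z \<in> cs (T m)"
    then obtain x where "z = mplus M (T m) x" "x \<in> X" unfolding cs_char by blast
    then show "z \<in> quot_map M X T (cs m)" using self_in[OF m] unfolding quot_map_def by blast
  qed
qed

lemma fc: "(\<forall>p\<in>set l. f p \<in> mcarr M) \<Longrightarrow> foldr (mplus M) (map f l) (mzero M) \<in> mcarr M"
  by (induction l) auto

lemma fold_q: "(\<forall>p\<in>set l. g p = cs (f p) \<and> f p \<in> mcarr M) \<Longrightarrow>
   foldr (mplus Q) (map g l) (mzero Q) = cs (foldr (mplus M) (map f l) (mzero M))"
  by (induction l) (auto simp: fc)

lemma Thc[simp]: "m \<in> mcarr M \<Longrightarrow> Th Delta S M T h m \<in> mcarr M"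
  unfolding Th_def by (rule fc) auto

lemma Th_q[simp]: assumes m: "m \<in> mcarr M"
  shows "Th Delta S Q (quot_map M X T) h (cs m) = cs (Th Delta S M T h m)"
  unfolding Th_def by (rule fold_q) (auto simp: m)

lemma q_tobj: assumes cc: "\<forall>h. \<forall>x\<in>mcarr M. Th Delta S M T h (T x) = T (Th Delta S M T h x)"
  shows "tobj sH Delta S Q (quot_map M X T)"
  unfolding tobj_def mlin_on_def ball_q using q_hmod cc by simp

lemma q_tiso: "tiso M T Q (quot_map M X T)"
  unfolding tiso_def
proof (intro exI conjI)
  have A1: "\<forall>m\<in>mcarr M. cs (T m) \<in> quot_map M X T ` mcarr Q"
  proof
    fix m assume m: "m \<in> mcarr M"
    show "cs (T m) \<in> quot_map M X T ` mcarr Q"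
      using m by (intro image_eqI[where x="cs (T m)"]) simp_all
  qed
  have A2: "\<forall>m\<in>mcarr M. \<forall>n\<in>mcarr M. cs (mplus M (T m) (T n)) = mplus Q (cs (T m)) (cs (T n))"
    by simp
  have A3: "\<forall>c. \<forall>m\<in>mcarr M. cs (msmult M c (T m)) = msmult Q c (cs (T m))"
    by simp
  have A4: "\<forall>h. \<forall>m\<in>mcarr M. cs (T (mact M h (T m))) = quot_map M X T (mact Q h (cs (T m)))"
    by simp
  show "tmor M T Q (quot_map M X T) cs"
    unfolding tmor_def mlin_on_def ball_img by (intro conjI) (fact A1 | fact A2 | fact A3 | fact A4)+
  show "tmor Q (quot_map M X T) M T (\<lambda>A. T (SOME a. a \<in> A))"
    unfolding tmor_def mlin_on_def ball_img ball_q
  proof (intro conjI ballI allI)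
    fix m assume m: "m \<in> mcarr M"
    have "T (SOME a. a \<in> quot_map M X T (cs m)) = T (T m)" using m by simp
    then show "T (SOME a. a \<in> quot_map M X T (cs m)) \<in> T ` mcarr M" using m by simp
  qed simp_all
  show "\<forall>x\<in>T ` mcarr M. T (SOME a. a \<in> cs x) = x" unfolding ball_img by simp
  show "\<forall>y\<in>quot_map M X T ` mcarr Q. cs (T (SOME a. a \<in> y)) = y" unfolding ball_img ball_q by simp
qed

end

theorem mainTheorem7:
  fixes sH :: "'k::field \<Rightarrow> 'h::ring_1 \<Rightarrow> 'h"
    and Delta :: "'h \<Rightarrow> ('h \<times> 'h) list" and eps :: "'h \<Rightarrow> 'k" and S :: "'h \<Rightarrow> 'h"
    and M :: "('k, 'h, 'm) hmod" and T :: "'m \<Rightarrow> 'm"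
  assumes hopf: "hopf_algebra sH Delta eps S"
    and obj: "tobj sH Delta S M T"
  shows "tobj sH Delta S (M\<lparr>mcarr := gen_submod M (T ` mcarr M)\<rparr>) T \<and>
         tiso M T (M\<lparr>mcarr := gen_submod M (T ` mcarr M)\<rparr>) T \<and>
         (\<forall>M'. submod M M' \<and> (\<forall>x\<in>M'. T x = mzero M) \<longrightarrow>
         tobj sH Delta S (quot_mod M M') (quot_map M M' T) \<and>
         tiso M T (quot_mod M M') (quot_map M M' T))"
proof -
  from obj have hmM: "hmodule sH M" and Tc: "\<forall>x\<in>mcarr M. T x \<in> mcarr M"
    and Tl: "mlin_on M (mcarr M) M T" and Ti: "\<forall>x\<in>mcarr M. T (T x) = T x"
    and Tcc: "\<forall>h. \<forall>x\<in>mcarr M. Th Delta S M T h (T x) = T (Th Delta S M T h x)"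
    unfolding tobj_def by auto
  interpret hm sH M by unfold_locales (rule hmM)
  define N where "N = gen_submod M (T ` mcarr M)"
  have Nsub: "submod M N" using gen_sub Tc unfolding N_def by blast
  have NC: "N \<subseteq> mcarr M" using Nsub unfolding submod_def by blast
  have TN: "T ` mcarr M \<subseteq> N" using gen_ge unfolding N_def by blast
  have ThN: "Th Delta S (M\<lparr>mcarr := N\<rparr>) T = Th Delta S M T"
    unfolding Th_def[abs_def] upd_sel ..
  have P1: "tobj sH Delta S (M\<lparr>mcarr := N\<rparr>) T"
    unfolding tobj_def upd_sel ThN
  proof (intro conjI)
    show "hmodule sH (M\<lparr>mcarr := N\<rparr>)" by (rule sub_hmod[OF Nsub])
    show "\<forall>x\<in>N. T x \<in> N" using TN NC by blast
    show "mlin_on (M\<lparr>mcarr := N\<rparr>) N (M\<lparr>mcarr := N\<rparr>) T"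
      using Tl NC unfolding mlin_on_def upd_sel by blast
    show "\<forall>x\<in>N. T (T x) = T x" using Ti NC by blast
    show "\<forall>h. \<forall>x\<in>N. Th Delta S M T h (T x) = T (Th Delta S M T h x)" using Tcc NC by blast
  qed
  have TNeq: "T ` N = T ` mcarr M"
  proof
    show "T ` N \<subseteq> T ` mcarr M" using NC by blast
    show "T ` mcarr M \<subseteq> T ` N"
    proof
      fix y assume "y \<in> T ` mcarr M"
      then obtain m where m: "m \<in> mcarr M" "y = T m" by blast
      then have "y = T (T m)" "T m \<in> N" using Ti TN by auto
      then show "y \<in> T ` N" by blast
    qed
  qed
  have P2: "tiso M T (M\<lparr>mcarr := N\<rparr>) T"
    unfolding tiso_def tmor_def upd_sel TNeq mlin_on_def
    by (rule exI[of _ "\<lambda>x. x"], rule exI[of _ "\<lambda>x. x"]) simp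
  have P3: "\<forall>M'. submod M M' \<and> (\<forall>x\<in>M'. T x = mzero M) \<longrightarrow>
         tobj sH Delta S (quot_mod M M') (quot_map M M' T) \<and>
         tiso M T (quot_mod M M') (quot_map M M' T)"
  proof (intro allI impI, elim conjE)
    fix M' assume sub: "submod M M'" and TX: "\<forall>x\<in>M'. T x = mzero M"
    interpret hqt sH M M' T
      by unfold_locales (use sub TX Tc Ti Tl in \<open>auto simp: mlin_on_def\<close>)
    show "tobj sH Delta S (quot_mod M M') (quot_map M M' T) \<and> tiso M T (quot_mod M M') (quot_map M M' T)"
      using q_tobj[OF Tcc] q_tiso by blast
  qed
  show ?thesis using P1 P2 P3 unfolding N_def by blast
qed

end
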